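(* Let $\mathcal{Q}=(Q,\leq^Q)$ with $Q=\{1,\dots,k\}$ and $\mathcal{P}=(P,\leq^P)$ be finite posets, $(C_1,\dots,C_w)$ a chain partition of $\mathcal{P}$, $f:Q\to\{1,\dots,w\}$, and $G=G(\mathcal{P},\mathcal{Q},f)$ the graph with vertex set $V_1\,\dot\cup\cdots\dot\cup\, V_k$, $V_i$ a copy of $C_{f(i)}$, where for copies $p\in V_i$, $q\in V_j$ of $p'\in C_{f(i)}$, $q'\in C_{f(j)}$, $pq\in E(G)$ iff $i\neq j$, ($p'\leq^P q'$ iff $i\leq^Q j$) and ($p'\geq^P q'$ iff $i\geq^Q j$). Equip each $V_i$ with the linear order $\leq^G$ inherited from the chain $C_{f(i)}$ under $\leq^P$. Let $i,j\in Q$ with $i\neq j$. Then: (i) for any $p\in V_i$ and $q_1,q_2,q_3\in V_j$ with $q_1\leq^G q_2\leq^G q_3$, if $pq_1,pq_3\in E(G)$ then $pq_2\in E(G)$; (ii) for any $p_1,p_2\in V_i$ and $q_1,q_2\in V_j$ with $p_1\leq^G p_2$ and $q_1\leq^G q_2$, if $p_1q_2,p_2q_1\in E(G)$ then $p_1q_1,p_2q_2\in E(G)$.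
   Context: A chain partition of $\mathcal{P}$ is a partition of $P$ into chains (sets of pairwise comparable elements under $\leq^P$). *)

theory Defs
  imports Main
begin

definition partial_order_on_set :: "'a set \<Rightarrow> ('a \<Rightarrow> 'a \<Rightarrow> bool) \<Rightarrow> bool" where
  "partial_order_on_set A le \<longleftrightarrow>
     (\<forall>x\<in>A. le x x) \<and>
     (\<forall>x\<in>A. \<forall>y\<in>A. le x y \<and> le y x \<longrightarrow> x = y) \<and>
     (\<forall>x\<in>A. \<forall>y\<in>A. \<forall>z\<in>A. le x y \<and> le y z \<longrightarrow> le x z)"

definition is_chain :: "('a \<Rightarrow> 'a \<Rightarrow> bool) \<Rightarrow> 'a set \<Rightarrow> bool" where
  "is_chain le C \<longleftrightarrow> (\<forall>x\<in>C. \<forall>y\<in>C. le x y \<or> le y x)"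

definition chain_partition :: "'a set \<Rightarrow> ('a \<Rightarrow> 'a \<Rightarrow> bool) \<Rightarrow> nat \<Rightarrow> (nat \<Rightarrow> 'a set) \<Rightarrow> bool" where
  "chain_partition P le w C \<longleftrightarrow>
     (\<forall>c\<in>{1..w}. C c \<noteq> {} \<and> C c \<subseteq> P \<and> is_chain le (C c)) \<and>
     (\<forall>c\<in>{1..w}. \<forall>d\<in>{1..w}. c \<noteq> d \<longrightarrow> C c \<inter> C d = {}) \<and>
     (\<Union>c\<in>{1..w}. C c) = P"

text \<open>Vertices of G(P,Q,f): the vertex (i,p) is the copy in V_i of p in C (f i).\<close>
definition G_vertices :: "nat \<Rightarrow> (nat \<Rightarrow> 'a set) \<Rightarrow> (nat \<Rightarrow> nat) \<Rightarrow> (nat \<times> 'a) set" where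
  "G_vertices k C f = {(i, p). i \<in> {1..k} \<and> p \<in> C (f i)}"

definition G_edge :: "nat \<Rightarrow> ('a \<Rightarrow> 'a \<Rightarrow> bool) \<Rightarrow> (nat \<Rightarrow> nat \<Rightarrow> bool) \<Rightarrow> (nat \<Rightarrow> 'a set) \<Rightarrow> (nat \<Rightarrow> nat)
    \<Rightarrow> nat \<times> 'a \<Rightarrow> nat \<times> 'a \<Rightarrow> bool" where
  "G_edge k leP leQ C f u v \<longleftrightarrow>
     u \<in> G_vertices k C f \<and> v \<in> G_vertices k C f \<and>
     (case u of (i, p) \<Rightarrow> case v of (j, q) \<Rightarrow>
        i \<noteq> j \<and> (leP p q \<longleftrightarrow> leQ i j) \<and> (leP q p \<longleftrightarrow> leQ j i))"

definition G_le :: "('a \<Rightarrow> 'a \<Rightarrow> bool) \<Rightarrow> nat \<times> 'a \<Rightarrow> nat \<times> 'a \<Rightarrow> bool" where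
  "G_le leP u v \<longleftrightarrow> fst u = fst v \<and> leP (snd u) (snd v)"

end

theory Submission
  imports Defs
begin

theorem lemma4p2:
  fixes P :: "'a set" and leP :: "'a \<Rightarrow> 'a \<Rightarrow> bool"
    and k :: nat and leQ :: "nat \<Rightarrow> nat \<Rightarrow> bool"
    and w :: nat and C :: "nat \<Rightarrow> 'a set" and f :: "nat \<Rightarrow> nat"
    and i j :: nat
  assumes finP: "finite P"
    and poP: "partial_order_on_set P leP"
    and poQ: "partial_order_on_set {1..k} leQ"
    and cp: "chain_partition P leP w C"
    and f_range: "\<forall>x\<in>{1..k}. f x \<in> {1..w}"
    and ij: "i \<in> {1..k}" "j \<in> {1..k}" "i \<noteq> j"
  shows "(\<forall>p\<in>C (f i). \<forall>q1\<in>C (f j). \<forall>q2\<in>C (f j). \<forall>q3\<in>C (f j).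
            G_le leP (j, q1) (j, q2) \<and> G_le leP (j, q2) (j, q3) \<and>
            G_edge k leP leQ C f (i, p) (j, q1) \<and> G_edge k leP leQ C f (i, p) (j, q3)
            \<longrightarrow> G_edge k leP leQ C f (i, p) (j, q2))
       \<and> (\<forall>p1\<in>C (f i). \<forall>p2\<in>C (f i). \<forall>q1\<in>C (f j). \<forall>q2\<in>C (f j).
            G_le leP (i, p1) (i, p2) \<and> G_le leP (j, q1) (j, q2) \<and>
            G_edge k leP leQ C f (i, p1) (j, q2) \<and> G_edge k leP leQ C f (i, p2) (j, q1)
            \<longrightarrow> G_edge k leP leQ C f (i, p1) (j, q1) \<and> G_edge k leP leQ C f (i, p2) (j, q2))"
proof -
  have sub: "C (f i) \<subseteq> P" "C (f j) \<subseteq> P" using cp f_range ij unfolding chain_partition_def by auto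
  have tr: "\<And>x y z. x \<in> P \<Longrightarrow> y \<in> P \<Longrightarrow> z \<in> P \<Longrightarrow> leP x y \<Longrightarrow> leP y z \<Longrightarrow> leP x z"
    and an: "\<And>x y. x \<in> P \<Longrightarrow> y \<in> P \<Longrightarrow> leP x y \<Longrightarrow> leP y x \<Longrightarrow> x = y"
    using poP unfolding partial_order_on_set_def by blast+
  have nq: "\<not> (leQ i j \<and> leQ j i)" using poQ ij unfolding partial_order_on_set_def by blast
  show ?thesis
    unfolding G_edge_def G_le_def G_vertices_def
    using sub ij nq
    apply (simp only: prod.case fst_conv snd_conv mem_Collect_eq)
    apply (intro conjI ballI impI)
    apply auto
    apply (metis (no_types) subsetD tr an)+
    done
qed

end
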